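(* For every positive integer $\alpha$ and every integer $k>1$, $$N_\alpha(k,k)\le (k^3-k^2+k)\binom{k}{2}.$$
   Context: A $k$-power is a word $u^k=uu\cdots u$ ($k$ copies) for a nonempty word $u$. A $k$-anti-power is a word $w=w_1\cdots w_k$ with $|w_1|=\cdots=|w_k|$ and $w_1,\dots,w_k$ pairwise distinct. $N_\alpha(k,k)$ denotes the smallest positive integer $N$ such that every word of length $N$ over an alphabet of size $\alpha$ contains a factor (contiguous subword) that is a $k$-power or a $k$-anti-power. *)

theory Defs
  imports Main
begin

definition is_power :: "nat \<Rightarrow> 'a list \<Rightarrow> bool" where
  "is_power k w \<longleftrightarrow> (\<exists>u. u \<noteq> [] \<and> w = concat (replicate k u))"

definition is_antipower :: "nat \<Rightarrow> 'a list \<Rightarrow> bool" where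
  "is_antipower k w \<longleftrightarrow> (\<exists>ws m. length ws = k \<and> (\<forall>x\<in>set ws. length x = m)
      \<and> distinct ws \<and> w = concat ws)"

definition is_factor :: "'a list \<Rightarrow> 'a list \<Rightarrow> bool" where
  "is_factor u w \<longleftrightarrow> (\<exists>p s. w = p @ u @ s)"

definition N_pow_anti :: "nat \<Rightarrow> nat \<Rightarrow> nat" where
  "N_pow_anti alpha k = (LEAST N. N > 0 \<and>
     (\<forall>w. length w = N \<and> set w \<subseteq> {..<alpha} \<longrightarrow>
        (\<exists>u. is_factor u w \<and> (is_power k u \<or> is_antipower k u))))"

end

theory Submission
  imports Defs
begin

lemma blocks_concat: "concat (map (\<lambda>t. take m (drop (t*m) w)) [0..<k]) = take (k*m) w"
proof (induction k)
  case 0 then show ?case by simp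
next
  case (Suc k)
  have "take (Suc k * m) w = take (k*m + m) w" by (simp add: add.commute)
  also have "\<dots> = take (k*m) w @ take m (drop (k*m) w)" by (rule take_add)
  finally show ?case using Suc by simp
qed

lemma factor_td: "is_factor (take l (drop a w)) w"
  unfolding is_factor_def
  by (metis append_take_drop_id)

lemma pair_of_no_anti:
  assumes "k*m \<le> length w" "\<not> is_antipower k (take (k*m) w)"
  shows "\<exists>i j. i<j \<and> j<k \<and> (\<forall>x<m. w!(i*m+x) = w!(j*m+x))"
proof -
  define ws where "ws = map (\<lambda>t. take m (drop (t*m) w)) [0..<k]"
  have len: "length ws = k" by (simp add: ws_def)
  have lens: "\<forall>x\<in>set ws. length x = m"
  proof
    fix x assume "x \<in> set ws"
    then obtain t where t: "t < k" "x = take m (drop (t*m) w)" by (auto simp: ws_def)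
    have "Suc t * m \<le> k * m" using t(1) by (intro mult_le_mono1) simp
    then have "t*m + m \<le> length w" using assms(1) by simp
    then show "length x = m" using t(2) by simp
  qed
  have "\<not> distinct ws"
  proof
    assume "distinct ws"
    moreover have "take (k*m) w = concat ws" using blocks_concat[of m w k] by (simp add: ws_def)
    ultimately have "is_antipower k (take (k*m) w)"
      unfolding is_antipower_def using len lens by blast
    then show False using assms(2) by contradiction
  qed
  then obtain a b where ab: "a < k" "b < k" "a \<noteq> b" "ws!a = ws!b"
    unfolding distinct_conv_nth len by blast
  define i where "i = min a b"
  define j where "j = max a b"
  have ij: "i < j" "j < k" "ws!i = ws!j" using ab by (auto simp: i_def j_def min_def max_def)
  have "\<forall>x<m. w!(i*m+x) = w!(j*m+x)"
  proof (intro allI impI)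
    fix x assume x: "x < m"
    have "Suc j * m \<le> k * m" using ij by (intro mult_le_mono1) simp
    then have bj: "j*m + m \<le> length w" using assms(1) by simp
    have "Suc i * m \<le> k * m" using ij by (intro mult_le_mono1) simp
    then have bi: "i*m + m \<le> length w" using assms(1) by simp
    have gen: "ws!t ! x = w!(t*m+x)" if "t < k" "t*m+m \<le> length w" for t
    proof -
      have "ws!t = take m (drop (t*m) w)" using that(1) by (simp add: ws_def)
      then show ?thesis using that(2) x by simp
    qed
    have "ws!i ! x = w!(i*m+x)" using gen[of i] ij bi by simp
    moreover have "ws!j ! x = w!(j*m+x)" using gen[of j] ij bj by simp
    ultimately show "w!(i*m+x) = w!(j*m+x)" using ij by simp
  qed
  then show ?thesis using ij by blast
qed

lemma concat_rep_Suc: "concat (replicate (Suc r) u) = concat (replicate r u) @ u"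
  by (induction r) auto

lemma power_lemma:
  assumes k: "0 < k" and p: "0 < p" and len: "a + k*p \<le> length w"
    and per: "\<forall>q. a \<le> q \<and> q + p < a + k*p \<longrightarrow> w!q = w!(q+p)"
  shows "is_power k (take (k*p) (drop a w))"
proof -
  define u where "u = take p (drop a w)"
  have perr: "\<forall>x<p. w!(a+r*p+x) = w!(a+x)" if "r < k" for r
    using that
  proof (induction r)
    case 0 then show ?case by simp
  next
    case (Suc r)
    show ?case
    proof (intro allI impI)
      fix x assume x: "x < p"
      have "Suc (Suc r) * p \<le> k * p" using Suc.prems by (intro mult_le_mono1) simp
      then have "a + r*p + x + p < a + k*p" using x by simp
      then have "w!(a+r*p+x) = w!(a+r*p+x+p)" using per by simp
      also have "a+r*p+x+p = a + Suc r*p + x" by simp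
      finally show "w!(a + Suc r*p + x) = w!(a+x)" using Suc x by simp
    qed
  qed
  have blk: "take p (drop (a+r*p) w) = u" if "r < k" for r
  proof -
    have "Suc r * p \<le> k * p" using that by (intro mult_le_mono1) simp
    then have b: "a + r*p + p \<le> length w" using len by simp
    show ?thesis unfolding u_def
      by (rule nth_equalityI) (use b perr[OF that] in auto)
  qed
  have "take (r*p) (drop a w) = concat (replicate r u)" if "r \<le> k" for r
    using that
  proof (induction r)
    case 0 then show ?case by simp
  next
    case (Suc r)
    have "take (Suc r * p) (drop a w) = take (r*p + p) (drop a w)" by (simp add: add.commute)
    also have "\<dots> = take (r*p) (drop a w) @ take p (drop (a + r*p) w)"
      by (metis take_add drop_drop add.commute)
    also have "\<dots> = concat (replicate r u) @ u" using Suc blk[of r] by simp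
    finally show ?case unfolding concat_rep_Suc .
  qed
  moreover have "u \<noteq> []" using k p len unfolding u_def
    by (cases k) auto
  ultimately show ?thesis unfolding is_power_def by auto
qed

lemma card_pairs: "card {(i,j). i<j \<and> j<(k::nat)} = k choose 2"
proof (induction k)
  case 0 then show ?case by simp
next
  case (Suc k)
  have "{(i,j). i<j \<and> j<Suc k} = {(i,j). i<j \<and> j<k} \<union> (\<lambda>i. (i,k)) ` {..<k}"
    by auto
  moreover have "finite {(i,j). i<j \<and> j<(k::nat)}"
    by (rule finite_subset[of _ "{..<k} \<times> {..<k}"]) auto
  moreover have "{(i,j). i<j \<and> j<k} \<inter> (\<lambda>i. (i,k)) ` {..<k} = {}" by auto
  ultimately have "card {(i,j). i<j \<and> j<Suc k} = (k choose 2) + k"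
    using Suc by (simp add: card_Un_disjoint card_image inj_on_def)
  then show ?case by (simp add: numeral_2_eq_2)
qed


lemma main_word:
  fixes w :: "'a list"
  assumes k: "1 < k" and lenw: "k * ((k choose 2)*(k-1)^2 + (k choose 2)) \<le> length w"
  shows "\<exists>u. is_factor u w \<and> (is_power k u \<or> is_antipower k u)"
proof (rule ccontr)
  assume no: "\<not> ?thesis"
  define n where "n = k choose 2"
  define A where "A = n*(k-1)^2"
  define I where "I = {A..A+n}"
  define S where "S = {(i,j). i<j \<and> j<(k::nat)}"
  have lenw': "k*(A+n) \<le> length w" using lenw by (simp add: A_def n_def)
  have finS: "finite S" unfolding S_def
    by (rule finite_subset[of _ "{..<k} \<times> {..<k}"]) auto
  have cardS: "card S = n" unfolding S_def n_def by (rule card_pairs)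
  have ex: "\<forall>m\<in>I. \<exists>ij\<in>S. \<forall>x<m. w!(fst ij*m+x) = w!(snd ij*m+x)"
  proof
    fix m assume "m\<in>I"
    then have "m \<le> A+n" by (simp add: I_def)
    then have "k*m \<le> k*(A+n)" by (rule mult_le_mono2)
    then have "k*m \<le> length w" using lenw' by linarith
    moreover have "\<not> is_antipower k (take (k*m) w)" using no factor_td[of "k*m" 0 w] by auto
    ultimately obtain i j where "i<j" "j<k" "\<forall>x<m. w!(i*m+x) = w!(j*m+x)"
      using pair_of_no_anti by blast
    then show "\<exists>ij\<in>S. \<forall>x<m. w!(fst ij*m+x) = w!(snd ij*m+x)"
      by (intro bexI[of _ "(i,j)"]) (auto simp: S_def)
  qed
  then obtain P where P: "\<forall>m\<in>I. P m \<in> S \<and> (\<forall>x<m. w!(fst (P m)*m+x) = w!(snd (P m)*m+x))"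
    by metis
  have "\<not> inj_on P I"
  proof
    assume "inj_on P I"
    moreover have "P ` I \<subseteq> S" using P by blast
    ultimately have "card I \<le> card S" using finS by (rule card_inj_on_le)
    then show False using cardS by (simp add: I_def)
  qed
  then obtain x y where xy: "x\<in>I" "y\<in>I" "x \<noteq> y" "P x = P y"
    unfolding inj_on_def by blast
  define m where "m = min x y"
  define m' where "m' = max x y"
  have mm: "m\<in>I" "m'\<in>I" "m<m'" "P m = P m'"
    using xy by (auto simp: m_def m'_def min_def max_def)
  obtain i j where ij: "P m = (i,j)" by fastforce
  have ijS: "i<j" "j<k" using P mm(1) ij by (auto simp: S_def)
  have E1: "\<forall>x<m. w!(i*m+x) = w!(j*m+x)" using P mm(1) ij by auto
  have E2: "\<forall>x<m'. w!(i*m'+x) = w!(j*m'+x)" using P mm(2,4) ij by (metis fst_conv snd_conv)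
  obtain d where d: "j = i + d" "0 < d" using ijS(1) less_imp_add_positive by blast
  define t where "t = m' - m"
  have t: "m' = m + t" "0 < t" "t \<le> n" using mm by (auto simp: t_def I_def)
  obtain K where K: "k = Suc K" "0 < K" using k by (cases k) auto
  have A_ge: "A \<le> m" using mm(1) by (simp add: I_def)
  have "i + d \<le> K" using ijS d K by simp
  then have "K*(i+d) \<le> K*K" by (rule mult_le_mono2)
  moreover have "i \<le> K*i" using K by simp
  moreover have "K*(i+d) = K*i + K*d" by (simp add: algebra_simps)
  ultimately have "i + K*d \<le> K*K" by linarith
  then have "(i + K*d)*t \<le> K*K*t" by (rule mult_le_mono1)
  also have "\<dots> \<le> K*K*n" using t by simp
  also have "\<dots> = A" by (simp add: A_def K power2_eq_square)
  finally have key: "i*t + K*(d*t) \<le> m" using A_ge by (simp add: algebra_simps)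
  define p where "p = d*t"
  define a where "a = j*m + i*t"
  have p0: "0 < p" using d t by (simp add: p_def)
  have kp: "k*p = K*p + p" using K by simp
  have e1: "j*m = i*m + d*m" using d by (simp add: algebra_simps)
  have e2: "i*m' = i*m + i*t" "j*m' = j*m + j*t" "d*m' = d*m + d*t" using t by (simp_all add: algebra_simps)
  have e7: "j*t = i*t + d*t" using d by (simp add: algebra_simps)
  have e3: "j*m + m \<le> k*m" using ijS by (metis Suc_leI mult_Suc mult_le_mono1 add.commute)
  have "d \<le> k" using ijS d by simp
  then have e4: "d*t \<le> k*t" by (rule mult_le_mono1)
  have e5: "k*m' = k*m + k*t" using t by (simp add: algebra_simps)
  have "m' \<le> A+n" using mm(2) by (simp add: I_def)
  then have e6: "k*m' \<le> k*(A+n)" by (rule mult_le_mono2)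
  have len: "a + k*p \<le> length w"
    using key kp e3 e4 e5 e6 lenw' unfolding a_def p_def by linarith
  have per: "\<forall>q. a \<le> q \<and> q + p < a + k*p \<longrightarrow> w!q = w!(q+p)"
  proof (intro allI impI)
    fix q assume q: "a \<le> q \<and> q + p < a + k*p"
    define pp where "pp = q - d*m"
    have q1: "q < a + K*p" using q kp by linarith
    have h1: "i*m + i*t \<le> pp" using q e1 unfolding pp_def a_def by linarith
    have h3: "d*m \<le> q" using q e1 unfolding a_def by linarith
    have h2: "pp < i*m + m" using q1 key e1 h3 unfolding pp_def a_def p_def by linarith
    define xx where "xx = pp - i*m"
    have xx: "xx < m" "i*m + xx = pp" "j*m + xx = q" using h1 h2 h3 e1 unfolding xx_def pp_def by linarith+
    have w1: "w!pp = w!q" using E1 xx by metis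
    have "pp - i*m' < m'" using h2 h1 e2 t by linarith
    then have "w!(i*m' + (pp - i*m')) = w!(j*m' + (pp - i*m'))" using E2 by simp
    moreover have "i*m' + (pp - i*m') = pp" using h1 e2 by linarith
    moreover have "j*m' + (pp - i*m') = q + p" using h1 h3 e1 e2 e7 unfolding pp_def p_def by linarith
    ultimately have w2: "w!pp = w!(q+p)" by simp
    show "w!q = w!(q+p)" using w1 w2 by simp
  qed
  have "is_power k (take (k*p) (drop a w))"
    using power_lemma[OF _ p0 len per] k by simp
  then show False using no factor_td by blast
qed

lemma arith_bound:
  assumes "1 < (k::nat)"
  shows "k * ((k choose 2)*(k-1)^2 + (k choose 2)) \<le> (k^3 - k^2 + k) * (k choose 2)"
proof -
  obtain K where K: "k = Suc K" using assms by (cases k) auto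
  have "k^3 = k^2 * k" by (simp add: power3_eq_cube power2_eq_square)
  then have "k^3 = k^2 + K*k^2" using K by simp
  then have r: "k^3 - k^2 + k = K*k*k + k" by (simp add: power2_eq_square algebra_simps)
  have "k*K*K \<le> K*k*k" using K by simp
  then have "k*((k-1)^2 + 1) \<le> k^3 - k^2 + k" using r K by (simp add: power2_eq_square algebra_simps)
  then have "k*((k-1)^2 + 1) * (k choose 2) \<le> (k^3 - k^2 + k) * (k choose 2)" by (rule mult_le_mono1)
  then show ?thesis by (simp add: algebra_simps)
qed

theorem corollary3p10:
  fixes alpha k :: nat
  assumes "alpha > 0" and "k > 1"
  shows "N_pow_anti alpha k \<le> (k^3 - k^2 + k) * (k choose 2)"
proof -
  define L where "L = (k^3 - k^2 + k) * (k choose 2)"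
  have c: "0 < k choose 2" using assms(2) by (simp add: zero_less_binomial_iff)
  have "k^2 \<le> k^3" using assms(2) by (intro power_increasing) simp_all
  then have "k \<le> k^3 - k^2 + k" by linarith
  then have pos: "0 < k^3 - k^2 + k" using assms(2) by linarith
  have L0: "0 < L" unfolding L_def using c pos by (metis nat_0_less_mult_iff)
  have "\<forall>w. length w = L \<and> set w \<subseteq> {..<alpha} \<longrightarrow>
        (\<exists>u. is_factor u w \<and> (is_power k u \<or> is_antipower k u))"
  proof (intro allI impI)
    fix w :: "nat list" assume "length w = L \<and> set w \<subseteq> {..<alpha}"
    then have "k * ((k choose 2)*(k-1)^2 + (k choose 2)) \<le> length w"
      using arith_bound[OF assms(2)] unfolding L_def by simp
    then show "\<exists>u. is_factor u w \<and> (is_power k u \<or> is_antipower k u)"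
      by (rule main_word[OF assms(2)])
  qed
  then have "N_pow_anti alpha k \<le> L" unfolding N_pow_anti_def using L0
    by (intro Least_le) blast
  then show ?thesis by (simp add: L_def)
qed

end
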